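(* (i) The graph with a single vertex and no arcs is a $2$-gadget. (ii) The directed cycle on three vertices (vertices $1,2,3$, arcs $(1,2),(2,3),(3,1)$) is a $3$-gadget (with any of its vertices as distinguished vertex $1$). (iii) Let $D$ be the oriented graph on vertex set $\{0,1,2,3,4,5\}$ with the 15 arcs $(1,0),(0,2),(2,1),(4,5),(5,3),(3,4),(5,0),(3,1),(4,2),(0,3),(1,4),(2,5),(0,4),(1,5),(2,3)$. Then $D$ is a $4$-gadget when vertex $4$ is taken as the distinguished first vertex, i.e. there are a $D$-function $f$ over $[4]$ and a function $\phi:[4]^{5}\to[4]$ such that $D$ is not $4$-solvable and every $x\in[4]^6$ with $f_v(x)\ne x_v$ for all $v$ satisfies $x_4=\phi(x_0,x_1,x_2,x_3,x_5)$.
   Context: A directed graph $D=(V,E)$ has arcs $E \subseteq \{(u,v)\in V^2 : u \neq v\}$; it is an oriented graph if it never contains both $(u,v)$ and $(v,u)$. $N^-(v)=\{u:(u,v)\in E\}$. For $q\ge2$ let $[q]=\{0,\dots,q-1\}$. A $D$-function over $[q]$ is a map $f=(f_v)_{v\in V}:[q]^V\to[q]^V$ with each $f_v(x)$ depending only on $(x_u)_{u\in N^-(v)}$. $D$ is $q$-solvable if some $D$-function $f$ over $[q]$ has the property that for every $x\in[q]^V$ there is $v$ with $f_v(x)=x_v$. A $q$-gadget is an oriented graph $D$ with vertices labelled $1,\dots,n$ (vertex $1$ being distinguished) which is not $q$-solvable, but for which there exist a $D$-function $f$ over $[q]$ and a function $\phi:[q]^{n-1}\to[q]$ such that every $x\in[q]^n$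 with $f_v(x)\ne x_v$ for all $v$ satisfies $x_1=\phi(x_2,\dots,x_n)$. *)

theory Defs
  imports Main "HOL-Library.FuncSet"
begin

definition oriented_graph :: "'a set \<Rightarrow> ('a \<times> 'a) set \<Rightarrow> bool" where
  "oriented_graph V E \<longleftrightarrow> finite V \<and> E \<subseteq> V \<times> V \<and>
     (\<forall>u v. (u, v) \<in> E \<longrightarrow> u \<noteq> v \<and> (v, u) \<notin> E)"

definition in_nbrs :: "('a \<times> 'a) set \<Rightarrow> 'a \<Rightarrow> 'a set" where
  "in_nbrs E v = {u. (u, v) \<in> E}"

definition configs :: "'a set \<Rightarrow> nat \<Rightarrow> ('a \<Rightarrow> nat) set" where
  "configs V q = (V \<rightarrow>\<^sub>E {..<q})"

definition D_function :: "'a set \<Rightarrow> ('a \<times> 'a) set \<Rightarrow> nat \<Rightarrow> (('a \<Rightarrow> nat) \<Rightarrow> ('a \<Rightarrow> nat)) \<Rightarrow> bool" where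
  "D_function V E q f \<longleftrightarrow>
     (\<forall>x \<in> configs V q. f x \<in> configs V q) \<and>
     (\<forall>v \<in> V. \<forall>x \<in> configs V q. \<forall>y \<in> configs V q.
        (\<forall>u \<in> in_nbrs E v. x u = y u) \<longrightarrow> f x v = f y v)"

definition q_solvable :: "'a set \<Rightarrow> ('a \<times> 'a) set \<Rightarrow> nat \<Rightarrow> bool" where
  "q_solvable V E q \<longleftrightarrow>
     (\<exists>f. D_function V E q f \<and> (\<forall>x \<in> configs V q. \<exists>v \<in> V. f x v = x v))"

text \<open>q-gadget with distinguished vertex d (playing the role of vertex 1);
  phi is a function of the remaining coordinates, i.e. of x restricted to V - {d}.\<close>
definition q_gadget :: "'a set \<Rightarrow> ('a \<times> 'a) set \<Rightarrow> nat \<Rightarrow> 'a \<Rightarrow> bool" where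
  "q_gadget V E q d \<longleftrightarrow>
     oriented_graph V E \<and> d \<in> V \<and> \<not> q_solvable V E q \<and>
     (\<exists>f \<phi>. D_function V E q f \<and>
        (\<forall>y \<in> configs (V - {d}) q. \<phi> y < q) \<and>
        (\<forall>x \<in> configs V q. (\<forall>v \<in> V. f x v \<noteq> x v) \<longrightarrow>
             x d = \<phi> (restrict x (V - {d}))))"

end

theory Submission
  imports Defs
begin

definition C :: "(nat \<Rightarrow> nat) \<Rightarrow> nat \<Rightarrow> nat" where
  "C h u = card {t. t < 4 \<and> h t = u}"

lemma card_sumn: "card {t::nat. t < n \<and> P t} = (\<Sum>t<n. of_bool (P t))"
proof -
  have "{t::nat. t < n \<and> P t} = {t \<in> {..<n}. P t}" by auto
  then have "card {t::nat. t < n \<and> P t} = (\<Sum>t \<in> {t \<in> {..<n::nat}. P t}. 1)" by simp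
  also have "\<dots> = (\<Sum>t<n. if P t then 1 else 0)" by (rule sum.inter_filter) simp
  finally show ?thesis by (simp add: of_bool_def)
qed

lemma card_sum4: "card {t::nat. t < 4 \<and> P t} = (\<Sum>t<4. of_bool (P t))"
  by (rule card_sumn)

lemma C_pair: assumes "u \<noteq> u'" shows "C h u + C h u' \<le> 4"
proof -
  have "C h u + C h u' = (\<Sum>t<4. of_bool (h t = u) + of_bool (h t = u'))"
    unfolding C_def card_sum4 sum.distrib ..
  also have "\<dots> \<le> (\<Sum>t<(4::nat). (1::nat))" by (rule sum_mono) (use assms in auto)
  finally show ?thesis by simp
qed

lemma C_sum: "C h 0 + C h 1 + C h 2 + C h 3 \<le> 4"
proof -
  have "C h 0 + C h 1 + C h 2 + C h 3 = (\<Sum>t<4. of_bool (h t = 0) + of_bool (h t = 1) + of_bool (h t = 2) + of_bool (h t = 3))"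
    unfolding C_def card_sum4 sum.distrib ..
  also have "\<dots> \<le> (\<Sum>t<(4::nat). (1::nat))" by (rule sum_mono) auto
  finally show ?thesis by simp
qed

lemma C_compl: "card {t. t < 4 \<and> h t \<noteq> u} + C h u = 4"
proof -
  have "card {t. t < 4 \<and> h t \<noteq> u} + C h u = (\<Sum>t<4. of_bool (h t \<noteq> u) + of_bool (h t = u))"
    unfolding C_def card_sum4 sum.distrib ..
  also have "\<dots> = (\<Sum>t<(4::nat). (1::nat))" by (rule sum.cong) auto
  finally show ?thesis by simp
qed

lemma card2_ex: assumes "2 \<le> card A" shows "\<exists>x\<in>A. x \<noteq> c"
proof (rule ccontr)
  assume "\<not> ?thesis"
  then have "A \<subseteq> {c}" by auto
  then have "card A \<le> card {c}" by (intro card_mono) auto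
  then have "card A \<le> 1" by simp
  then show False using assms by simp
qed

lemma cyc:
  assumes Z: "3 \<le> card Z" and Y: "2 \<le> card Y" and W: "2 \<le> card W"
  shows "\<exists>b0\<in>Z. \<exists>b1\<in>W. \<exists>b2\<in>Y. b0 \<noteq> k0 b2 \<and> b1 \<noteq> k1 b0 \<and> b2 \<noteq> k2 b1"
proof -
  have fZ: "finite Z"
  proof (rule ccontr)
    assume "infinite Z" then show False using Z by simp
  qed
  obtain w1 where w1: "w1 \<in> W" using card2_ex[OF W, of undefined] by blast
  obtain w2 where w2: "w2 \<in> W" "w2 \<noteq> w1" using card2_ex[OF W, of w1] by blast
  define M where "M w = {t\<in>Z. k1 t = w}" for w
  have fM: "finite (M v)" for v using fZ by (auto simp: M_def)
  have "card (M w1 \<union> M w2) = card (M w1) + card (M w2)"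
    by (rule card_Un_disjoint) (use fM w2 in \<open>auto simp: M_def\<close>)
  moreover have "card (M w1 \<union> M w2) \<le> card Z"
    by (rule card_mono[OF fZ]) (auto simp: M_def)
  ultimately have sm: "card (M w1) + card (M w2) \<le> card Z" by simp
  have "\<exists>w\<in>W. 2 * card (M w) \<le> card Z"
  proof (cases "card (M w1) \<le> card (M w2)")
    case True then show ?thesis using w1 sm by (intro bexI[of _ w1]) auto
  next
    case False then show ?thesis using w2 sm by (intro bexI[of _ w2]) auto
  qed
  then obtain w where w: "w \<in> W" "2 * card (M w) \<le> card Z" by blast
  have "card (Z - M w) = card Z - card (M w)"
    by (rule card_Diff_subset) (auto simp: M_def intro: finite_subset[OF _ fZ])
  then have ZM: "2 \<le> card (Z - M w)" using w Z by linarith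
  obtain b2 where b2: "b2 \<in> Y" "b2 \<noteq> k2 w" using card2_ex[OF Y, of "k2 w"] by blast
  obtain b0 where b0: "b0 \<in> Z - M w" "b0 \<noteq> k0 b2" using card2_ex[OF ZM, of "k0 b2"] by blast
  have "b0 \<in> Z" "w \<noteq> k1 b0" using b0 by (auto simp: M_def)
  then show ?thesis using b0(2) b2 w(1) by blast
qed

lemma core:
  fixes g0 g1 g2 :: "nat \<Rightarrow> nat \<Rightarrow> nat" and k0 k1 k2 :: "nat \<Rightarrow> nat \<Rightarrow> nat \<Rightarrow> nat"
  shows "\<exists>a0<4. \<exists>a1<4. \<exists>a2<4. \<exists>b0<4. \<exists>b1<4. \<exists>b2<4.
    a0 \<noteq> g0 a1 b2 \<and> a1 \<noteq> g1 a2 b0 \<and> a2 \<noteq> g2 a0 b1 \<and>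
    b0 \<noteq> k0 b2 a0 a2 \<and> b1 \<noteq> k1 b0 a1 a0 \<and> b2 \<noteq> k2 b1 a2 a1"
proof -
  define r where "r a c \<longleftrightarrow> 3 \<le> C (g0 c) a" for a c
  have runiq: "a = a'" if "r a c" "r a' c" for a a' c
    using that C_pair[of a a' "g0 c"] unfolding r_def by (cases "a = a'") auto
  define \<beta> where "\<beta> c = (if r 0 c then 0 else if r 1 c then 1 else if r 2 c then 2 else if r 3 c then 3 else (4::nat))" for c
  have rb: "\<beta> c = a" if "a < 4" "r a c" for a c
  proof -
    have "a = 0 \<or> a = 1 \<or> a = 2 \<or> a = 3" using that(1) by auto
    then show ?thesis using that runiq[of _ c] unfolding \<beta>_def by (auto split: if_splits)
  qed
  have "C \<beta> 0 \<le> 1 \<or> C \<beta> 1 \<le> 1 \<or> C \<beta> 2 \<le> 1 \<or> C \<beta> 3 \<le> 1" using C_sum[of \<beta>] by linarith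
  then have "\<exists>a<4. C \<beta> a \<le> 1"
    apply (elim disjE)
    subgoal by (rule exI[of _ 0]) simp
    subgoal by (rule exI[of _ 1]) simp
    subgoal by (rule exI[of _ 2]) simp
    subgoal by (rule exI[of _ 3]) simp
    done
  then obtain a0 where a0: "a0 < 4" "C \<beta> a0 \<le> 1" by blast
  have a0u: "c = c'" if "c < 4" "c' < 4" "r a0 c" "r a0 c'" for c c'
  proof -
    have "c \<in> {t. t < 4 \<and> \<beta> t = a0}" "c' \<in> {t. t < 4 \<and> \<beta> t = a0}"
      using that rb a0 by auto
    moreover have "card {t. t < 4 \<and> \<beta> t = a0} \<le> 1" using a0 by (simp add: C_def)
    moreover have "finite {t. t < 4 \<and> \<beta> t = a0}" by simp
    ultimately show ?thesis using card_le_Suc0_iff_eq[of "{t. t < 4 \<and> \<beta> t = a0}"] by simp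
  qed
  have "C (g2 a0) 0 \<le> 2 \<or> C (g2 a0) 1 \<le> 2" using C_sum[of "g2 a0"] by linarith
  then have "\<exists>a<4. C (g2 a0) a \<le> 2"
    apply (elim disjE)
    subgoal by (rule exI[of _ 0]) simp
    subgoal by (rule exI[of _ 1]) simp
    done
  then obtain a2 where a2: "a2 < 4" "C (g2 a0) a2 \<le> 2" by blast
  have pick: "\<exists>a1<4. C (g1 a2) a1 \<le> 1 \<and> \<not> r a0 a1"
    if "i < 4" "j < 4" "i \<noteq> j" "C (g1 a2) i \<le> 1" "C (g1 a2) j \<le> 1" for i j
    using that a0u[of i j] by blast
  have "(C (g1 a2) 0 \<le> 1 \<and> C (g1 a2) 1 \<le> 1) \<or> (C (g1 a2) 0 \<le> 1 \<and> C (g1 a2) 2 \<le> 1) \<or>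
        (C (g1 a2) 0 \<le> 1 \<and> C (g1 a2) 3 \<le> 1) \<or> (C (g1 a2) 1 \<le> 1 \<and> C (g1 a2) 2 \<le> 1) \<or>
        (C (g1 a2) 1 \<le> 1 \<and> C (g1 a2) 3 \<le> 1) \<or> (C (g1 a2) 2 \<le> 1 \<and> C (g1 a2) 3 \<le> 1)"
    using C_sum[of "g1 a2"] by linarith
  then have "\<exists>a1<4. C (g1 a2) a1 \<le> 1 \<and> \<not> r a0 a1"
    apply (elim disjE)
    subgoal by (rule pick[of 0 1]) auto
    subgoal by (rule pick[of 0 2]) auto
    subgoal by (rule pick[of 0 3]) auto
    subgoal by (rule pick[of 1 2]) auto
    subgoal by (rule pick[of 1 3]) auto
    subgoal by (rule pick[of 2 3]) auto
    done
  then obtain a1 where a1: "a1 < 4" "C (g1 a2) a1 \<le> 1" "\<not> r a0 a1" by blast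
  have c0: "C (g0 a1) a0 \<le> 2" using a1 unfolding r_def by simp
  define Z where "Z = {t. t < 4 \<and> g1 a2 t \<noteq> a1}"
  define W where "W = {t. t < 4 \<and> g2 a0 t \<noteq> a2}"
  define Y where "Y = {t. t < 4 \<and> g0 a1 t \<noteq> a0}"
  have "3 \<le> card Z" using C_compl[of "g1 a2" a1] a1 unfolding Z_def by linarith
  moreover have "2 \<le> card Y" using C_compl[of "g0 a1" a0] c0 unfolding Y_def by linarith
  moreover have "2 \<le> card W" using C_compl[of "g2 a0" a2] a2 unfolding W_def by linarith
  ultimately obtain b0 b1 b2 where "b0 \<in> Z" "b1 \<in> W" "b2 \<in> Y"
     "b0 \<noteq> k0 b2 a0 a2" "b1 \<noteq> k1 b0 a1 a0" "b2 \<noteq> k2 b1 a2 a1"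
    using cyc[of Z Y W "\<lambda>b2. k0 b2 a0 a2" "\<lambda>b0. k1 b0 a1 a0" "\<lambda>b1. k2 b1 a2 a1"] by blast
  then have "a0 < 4 \<and> a1 < 4 \<and> a2 < 4 \<and> b0 < 4 \<and> b1 < 4 \<and> b2 < 4 \<and>
    a0 \<noteq> g0 a1 b2 \<and> a1 \<noteq> g1 a2 b0 \<and> a2 \<noteq> g2 a0 b1 \<and>
    b0 \<noteq> k0 b2 a0 a2 \<and> b1 \<noteq> k1 b0 a1 a0 \<and> b2 \<noteq> k2 b1 a2 a1"
    using a0 a1 a2 unfolding Z_def W_def Y_def by auto
  then show ?thesis
    apply -
    apply (rule exI[of _ a0], rule conjI, simp)
    apply (rule exI[of _ a1], rule conjI, simp)
    apply (rule exI[of _ a2], rule conjI, simp)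
    apply (rule exI[of _ b0], rule conjI, simp)
    apply (rule exI[of _ b1], rule conjI, simp)
    apply (rule exI[of _ b2], rule conjI, simp)
    apply simp
    done
qed


definition T0 :: "nat list" where "T0 = [2, 3, 1, 0, 1, 2, 0, 3, 0, 1, 3, 2, 3, 0, 2, 1]"
definition T1 :: "nat list" where "T1 = [2, 0, 3, 1, 3, 1, 0, 2, 1, 3, 2, 0, 0, 2, 1, 3]"
definition T2 :: "nat list" where "T2 = [3, 2, 1, 0, 2, 0, 3, 1, 0, 1, 2, 3, 1, 3, 0, 2]"
definition T3 :: "nat list" where "T3 = [0, 3, 2, 1, 3, 1, 0, 2, 1, 2, 3, 0, 2, 0, 1, 3, 2, 0, 1, 3, 0, 3, 2, 1, 3, 1, 0, 2, 1, 2, 3, 0, 3, 1, 0, 2, 1, 2, 3, 0, 2, 0, 1, 3, 0, 3, 2, 1, 1, 2, 3, 0, 2, 0, 1, 3, 0, 3, 2, 1, 3, 1, 0, 2]"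
definition T4 :: "nat list" where "T4 = [0, 2, 3, 1, 1, 0, 2, 3, 3, 1, 0, 2, 2, 3, 1, 0, 3, 1, 0, 2, 2, 3, 1, 0, 0, 2, 3, 1, 1, 0, 2, 3, 2, 3, 1, 0, 0, 2, 3, 1, 1, 0, 2, 3, 3, 1, 0, 2, 1, 0, 2, 3, 3, 1, 0, 2, 2, 3, 1, 0, 0, 2, 3, 1]"
definition T5 :: "nat list" where "T5 = [0, 1, 3, 2, 1, 3, 2, 0, 2, 0, 1, 3, 3, 2, 0, 1, 2, 0, 1, 3, 0, 1, 3, 2, 3, 2, 0, 1, 1, 3, 2, 0, 1, 3, 2, 0, 3, 2, 0, 1, 0, 1, 3, 2, 2, 0, 1, 3, 3, 2, 0, 1, 2, 0, 1, 3, 1, 3, 2, 0, 0, 1, 3, 2]"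

definition fpfN :: "nat \<Rightarrow> nat \<Rightarrow> nat \<Rightarrow> nat \<Rightarrow> nat \<Rightarrow> nat \<Rightarrow> bool" where
  "fpfN x0 x1 x2 x3 x4 x5 \<longleftrightarrow>
     (T0 ! (4*x1 + x5)) mod 4 \<noteq> x0 \<and> (T1 ! (4*x2 + x3)) mod 4 \<noteq> x1 \<and> (T2 ! (4*x0 + x4)) mod 4 \<noteq> x2 \<and>
     (T3 ! (16*x5 + 4*x0 + x2)) mod 4 \<noteq> x3 \<and> (T4 ! (16*x3 + 4*x1 + x0)) mod 4 \<noteq> x4 \<and>
     (T5 ! (16*x4 + 4*x2 + x1)) mod 4 \<noteq> x5"

lemma chk: "list_all (\<lambda>x0. list_all (\<lambda>x1. list_all (\<lambda>x2. list_all (\<lambda>x3. list_all (\<lambda>x5.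
   list_all (\<lambda>c. list_all (\<lambda>d. fpfN x0 x1 x2 x3 c x5 \<longrightarrow> fpfN x0 x1 x2 x3 d x5 \<longrightarrow> c = d) [0..<4]) [0..<4])
   [0..<4]) [0..<4]) [0..<4]) [0..<4]) [0..<4]"
  by code_simp



lemma Dloc:
  assumes "D_function V E q f" "v \<in> V" "x \<in> configs V q" "y \<in> configs V q"
    "\<And>u. u \<in> in_nbrs E v \<Longrightarrow> x u = y u"
  shows "f x v = f y v"
  using assms unfolding D_function_def by blast

definition mk1 :: "nat \<Rightarrow> nat \<Rightarrow> nat" where
  "mk1 a = (\<lambda>v. if v = 1 then a else undefined)"

lemma mk1_conf: "a < 2 \<Longrightarrow> mk1 a \<in> configs {1::nat} 2"
  by (auto simp: configs_def mk1_def PiE_iff extensional_def)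

lemma part1: "q_gadget {1::nat} {} 2 1"
proof -
  have ns: "\<not> q_solvable {1::nat} {} 2"
  proof
    assume "q_solvable {1::nat} {} 2"
    then obtain f where f: "D_function {1::nat} {} 2 f"
      "\<forall>x \<in> configs {1::nat} 2. \<exists>v \<in> {1}. f x v = x v"
      unfolding q_solvable_def by blast
    define c where "c = f (mk1 0) 1"
    define a where "a = (if c = 0 then 1 else (0::nat))"
    have a2: "a < 2" by (simp add: a_def)
    have e1: "f (mk1 a) 1 = f (mk1 0) 1"
      by (rule Dloc[OF f(1) _ mk1_conf[OF a2] mk1_conf[of 0]]) (auto simp: in_nbrs_def)
    have e2: "f (mk1 a) 1 = mk1 a 1" using f(2) mk1_conf[OF a2] by auto
    have e3: "mk1 a 1 = a" by (simp add: mk1_def)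
    have "a = c" using e1 e2 e3 unfolding c_def by simp
    then show False by (simp add: a_def split: if_splits)
  qed
  define f :: "(nat \<Rightarrow> nat) \<Rightarrow> nat \<Rightarrow> nat" where "f = (\<lambda>x v. if v = 1 then 0 else undefined)"
  have Df: "D_function {1::nat} {} 2 f"
    unfolding D_function_def by (auto simp: f_def configs_def PiE_iff extensional_def)
  have "\<forall>x \<in> configs {1::nat} 2. (\<forall>v \<in> {1}. f x v \<noteq> x v) \<longrightarrow> x 1 = (\<lambda>y. 1::nat) (restrict x ({1} - {1}))"
    by (auto simp: f_def configs_def PiE_iff)
  then show ?thesis unfolding q_gadget_def oriented_graph_def using ns Df
    by (intro conjI exI[of _ f] exI[of _ "\<lambda>y. 1::nat"]) auto
qed


definition C3 :: "(nat \<Rightarrow> nat) \<Rightarrow> nat \<Rightarrow> nat" where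
  "C3 h u = card {t. t < 3 \<and> h t = u}"

lemma C3_sum: "C3 h 0 + C3 h 1 + C3 h 2 \<le> 3"
proof -
  have "C3 h 0 + C3 h 1 + C3 h 2 = (\<Sum>t<3. of_bool (h t = 0) + of_bool (h t = 1) + of_bool (h t = 2))"
    unfolding C3_def card_sumn sum.distrib ..
  also have "\<dots> \<le> (\<Sum>t<(3::nat). (1::nat))" by (rule sum_mono) auto
  finally show ?thesis by simp
qed

lemma C3_compl: "card {t. t < 3 \<and> h t \<noteq> u} + C3 h u = 3"
proof -
  have "card {t. t < 3 \<and> h t \<noteq> u} + C3 h u = (\<Sum>t<3. of_bool (h t \<noteq> u) + of_bool (h t = u))"
    unfolding C3_def card_sumn sum.distrib ..
  also have "\<dots> = (\<Sum>t<(3::nat). (1::nat))" by (rule sum.cong) auto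
  finally show ?thesis by simp
qed

lemma core3:
  fixes g1 g2 g3 :: "nat \<Rightarrow> nat"
  shows "\<exists>a<3. \<exists>b<3. \<exists>c<3. b \<noteq> g2 a \<and> c \<noteq> g3 b \<and> a \<noteq> g1 c"
proof -
  have "C3 g1 0 \<le> 1 \<or> C3 g1 1 \<le> 1 \<or> C3 g1 2 \<le> 1" using C3_sum[of g1] by linarith
  then have "\<exists>a<3. C3 g1 a \<le> 1"
    apply (elim disjE)
    subgoal by (rule exI[of _ 0]) simp
    subgoal by (rule exI[of _ 1]) simp
    subgoal by (rule exI[of _ 2]) simp
    done
  then obtain a where a: "a < 3" "C3 g1 a \<le> 1" by blast
  define b where "b = (if g2 a = 0 then 1 else (0::nat))"
  have b: "b < 3" "b \<noteq> g2 a" by (auto simp: b_def)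
  have "2 \<le> card {t. t < 3 \<and> g1 t \<noteq> a}" using C3_compl[of g1 a] a by linarith
  from card2_ex[OF this, of "g3 b"] obtain c where c: "c < 3" "g1 c \<noteq> a" "c \<noteq> g3 b" by blast
  have "a < 3 \<and> b < 3 \<and> c < 3 \<and> b \<noteq> g2 a \<and> c \<noteq> g3 b \<and> a \<noteq> g1 c" using a b c by auto
  then show ?thesis
    apply -
    apply (rule exI[of _ a], rule conjI, simp)
    apply (rule exI[of _ b], rule conjI, simp)
    apply (rule exI[of _ c], rule conjI, simp)
    apply simp
    done
qed

definition mk3 :: "nat \<Rightarrow> nat \<Rightarrow> nat \<Rightarrow> nat \<Rightarrow> nat" where
  "mk3 a b c = (\<lambda>v. if v = 1 then a else if v = 2 then b else if v = 3 then c else undefined)"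

lemma mk3_conf: "a < 3 \<Longrightarrow> b < 3 \<Longrightarrow> c < 3 \<Longrightarrow> mk3 a b c \<in> configs {1::nat, 2, 3} 3"
  by (auto simp: configs_def mk3_def PiE_iff extensional_def)

lemma mk3_app: "mk3 a b c 1 = a" "mk3 a b c 2 = b" "mk3 a b c 3 = c"
  by (auto simp: mk3_def)

abbreviation "E2 \<equiv> {(1::nat, 2::nat), (2, 3), (3, 1)}"

lemma in_nbrs2: "in_nbrs E2 1 = {3}" "in_nbrs E2 2 = {1}" "in_nbrs E2 3 = {2}"
  by (auto simp: in_nbrs_def)

lemma ns2: "\<not> q_solvable {1::nat, 2, 3} E2 3"
proof
  assume "q_solvable {1::nat, 2, 3} E2 3"
  then obtain f where f: "D_function {1::nat, 2, 3} E2 3 f"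
    "\<forall>x \<in> configs {1::nat, 2, 3} 3. \<exists>v \<in> {1, 2, 3}. f x v = x v"
    unfolding q_solvable_def by blast
  obtain a b c where abc: "a < 3" "b < 3" "c < 3" "b \<noteq> f (mk3 a 0 0) 2"
     "c \<noteq> f (mk3 0 b 0) 3" "a \<noteq> f (mk3 0 0 c) 1"
    using core3[of "\<lambda>a. f (mk3 a 0 0) 2" "\<lambda>b. f (mk3 0 b 0) 3" "\<lambda>c. f (mk3 0 0 c) 1"] by blast
  have X: "mk3 a b c \<in> configs {1::nat, 2, 3} 3" using abc mk3_conf by auto
  have e2: "f (mk3 a b c) 2 = f (mk3 a 0 0) 2"
    by (rule Dloc[OF f(1) _ X mk3_conf]) (use abc in \<open>auto simp: in_nbrs_def mk3_def\<close>)
  have e3: "f (mk3 a b c) 3 = f (mk3 0 b 0) 3"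
    by (rule Dloc[OF f(1) _ X mk3_conf]) (use abc in \<open>auto simp: in_nbrs_def mk3_def\<close>)
  have e1: "f (mk3 a b c) 1 = f (mk3 0 0 c) 1"
    by (rule Dloc[OF f(1) _ X mk3_conf]) (use abc in \<open>auto simp: in_nbrs_def mk3_def\<close>)
  obtain v where v: "v \<in> {1::nat, 2, 3}" "f (mk3 a b c) v = mk3 a b c v" using f(2) X by blast
  then consider "f (mk3 a b c) 1 = mk3 a b c 1" | "f (mk3 a b c) 2 = mk3 a b c 2" | "f (mk3 a b c) 3 = mk3 a b c 3"
    by blast
  then show False
  proof cases
    case 1 then show False using e1 abc(6) unfolding mk3_app by simp
  next
    case 2 then show False using e2 abc(4) unfolding mk3_app by simp
  next
    case 3 then show False using e3 abc(5) unfolding mk3_app by simp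
  qed
qed

lemma part2: "\<forall>d \<in> {1::nat, 2, 3}. q_gadget {1, 2, 3} {(1, 2), (2, 3), (3, 1)} 3 d"
proof
  fix d :: nat assume d: "d \<in> {1, 2, 3}"
  define f :: "(nat \<Rightarrow> nat) \<Rightarrow> nat \<Rightarrow> nat" where
    "f = (\<lambda>x v. if v = 1 then x 3 else if v = 2 then x 1 else if v = 3 then x 2 else undefined)"
  define \<phi> :: "(nat \<Rightarrow> nat) \<Rightarrow> nat" where "\<phi> = (\<lambda>y. (3 - (\<Sum>v\<in>{1,2,3} - {d}. y v)) mod 3)"
  have Df: "D_function {1::nat, 2, 3} E2 3 f"
    unfolding D_function_def
    by (auto simp: f_def configs_def PiE_iff extensional_def in_nbrs_def)
  have og: "oriented_graph {1::nat, 2, 3} E2" by (auto simp: oriented_graph_def)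
  have ph: "\<forall>y \<in> configs ({1::nat, 2, 3} - {d}) 3. \<phi> y < 3" by (simp add: \<phi>_def)
  have fp: "x d = \<phi> (restrict x ({1, 2, 3} - {d}))"
    if x: "x \<in> configs {1::nat, 2, 3} 3" and nf: "\<forall>v \<in> {1::nat, 2, 3}. f x v \<noteq> x v" for x
  proof -
    have lt: "x 1 < 3" "x 2 < 3" "x 3 < 3" using x by (auto simp: configs_def)
    have ne: "x 3 \<noteq> x 1" "x 1 \<noteq> x 2" "x 2 \<noteq> x 3" using nf by (auto simp: f_def)
    have D3: "a = (3 - (b + c)) mod 3" if "a < 3" "b < 3" "c < 3" "a \<noteq> b" "b \<noteq> c" "a \<noteq> c" for a b c :: nat
    proof -
      have "a = 0 \<or> a = 1 \<or> a = 2" "b = 0 \<or> b = 1 \<or> b = 2" "c = 0 \<or> c = 1 \<or> c = 2" using that by auto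
      then show ?thesis using that by auto
    qed
    consider "d = 1" | "d = 2" | "d = 3" using d by auto
    then show ?thesis
    proof cases
      case 1
      have "(\<Sum>v\<in>{1,2,3} - {d}. restrict x ({1, 2, 3} - {d}) v) = x 2 + x 3" using 1 by simp
      then show ?thesis using D3[of "x 1" "x 2" "x 3"] lt ne unfolding \<phi>_def 1 by simp
    next
      case 2
      have s2: "{1::nat,2,3} - {d} = {1,3}" using 2 by auto
      have "(\<Sum>v\<in>{1,2,3} - {d}. restrict x ({1, 2, 3} - {d}) v) = x 1 + x 3" unfolding s2 by simp
      then show ?thesis using D3[of "x 2" "x 1" "x 3"] lt ne unfolding \<phi>_def 2 by simp
    next
      case 3
      have s3: "{1::nat,2,3} - {d} = {1,2}" using 3 by auto
      have "(\<Sum>v\<in>{1,2,3} - {d}. restrict x ({1, 2, 3} - {d}) v) = x 1 + x 2" unfolding s3 by simp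
      then show ?thesis using D3[of "x 3" "x 1" "x 2"] lt ne unfolding \<phi>_def 3 by simp
    qed
  qed
  show "q_gadget {1, 2, 3} {(1, 2), (2, 3), (3, 1)} 3 d"
    unfolding q_gadget_def
    using og d ns2 Df ph fp by blast
qed


abbreviation "E6 \<equiv> {(1::nat,0::nat),(0,2),(2,1),(4,5),(5,3),(3,4),(5,0),(3,1),(4,2),(0,3),(1,4),(2,5),(0,4),(1,5),(2,3)}"

definition mk6 :: "nat \<Rightarrow> nat \<Rightarrow> nat \<Rightarrow> nat \<Rightarrow> nat \<Rightarrow> nat \<Rightarrow> nat \<Rightarrow> nat" where
  "mk6 a0 a1 a2 b0 b1 b2 = (\<lambda>v. if v = 0 then a0 else if v = 1 then a1 else if v = 2 then a2
     else if v = 3 then b0 else if v = 4 then b1 else if v = 5 then b2 else undefined)"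

lemma V6: "(v::nat) \<in> {0..5} \<longleftrightarrow> v = 0 \<or> v = 1 \<or> v = 2 \<or> v = 3 \<or> v = 4 \<or> v = 5"
  by auto

lemma mk6_conf: "a0 < 4 \<Longrightarrow> a1 < 4 \<Longrightarrow> a2 < 4 \<Longrightarrow> b0 < 4 \<Longrightarrow> b1 < 4 \<Longrightarrow> b2 < 4 \<Longrightarrow>
  mk6 a0 a1 a2 b0 b1 b2 \<in> configs {0..5} 4"
  unfolding configs_def PiE_iff extensional_def V6 by (auto simp: mk6_def)

lemma mk6_app: "mk6 a0 a1 a2 b0 b1 b2 0 = a0" "mk6 a0 a1 a2 b0 b1 b2 1 = a1"
  "mk6 a0 a1 a2 b0 b1 b2 2 = a2" "mk6 a0 a1 a2 b0 b1 b2 3 = b0"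
  "mk6 a0 a1 a2 b0 b1 b2 4 = b1" "mk6 a0 a1 a2 b0 b1 b2 5 = b2"
  by (auto simp: mk6_def)

lemma ns6: "\<not> q_solvable {0::nat..5} E6 4"
proof
  assume "q_solvable {0::nat..5} E6 4"
  then obtain f where f: "D_function {0::nat..5} E6 4 f"
    "\<forall>x \<in> configs {0::nat..5} 4. \<exists>v \<in> {0..5}. f x v = x v"
    unfolding q_solvable_def by blast
  obtain a0 a1 a2 b0 b1 b2 where ab: "a0 < 4" "a1 < 4" "a2 < 4" "b0 < 4" "b1 < 4" "b2 < 4"
    "a0 \<noteq> f (mk6 0 a1 0 0 0 b2) 0" "a1 \<noteq> f (mk6 0 0 a2 b0 0 0) 1" "a2 \<noteq> f (mk6 a0 0 0 0 b1 0) 2"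
    "b0 \<noteq> f (mk6 a0 0 a2 0 0 b2) 3" "b1 \<noteq> f (mk6 a0 a1 0 b0 0 0) 4" "b2 \<noteq> f (mk6 0 a1 a2 0 b1 0) 5"
    using core[of "\<lambda>c t. f (mk6 0 c 0 0 0 t) 0" "\<lambda>c t. f (mk6 0 0 c t 0 0) 1" "\<lambda>c t. f (mk6 c 0 0 0 t 0) 2"
       "\<lambda>s u w. f (mk6 u 0 w 0 0 s) 3" "\<lambda>s u w. f (mk6 w u 0 s 0 0) 4" "\<lambda>s u w. f (mk6 0 w u 0 s 0) 5"]
    by blast
  define x where "x = mk6 a0 a1 a2 b0 b1 b2"
  have X: "x \<in> configs {0..5} 4" unfolding x_def using ab mk6_conf by auto
  have e0: "f x 0 = f (mk6 0 a1 0 0 0 b2) 0"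
    by (rule Dloc[OF f(1) _ X mk6_conf]) (use ab in \<open>auto simp: in_nbrs_def mk6_def x_def\<close>)
  have e1: "f x 1 = f (mk6 0 0 a2 b0 0 0) 1"
    by (rule Dloc[OF f(1) _ X mk6_conf]) (use ab in \<open>auto simp: in_nbrs_def mk6_def x_def\<close>)
  have e2: "f x 2 = f (mk6 a0 0 0 0 b1 0) 2"
    by (rule Dloc[OF f(1) _ X mk6_conf]) (use ab in \<open>auto simp: in_nbrs_def mk6_def x_def\<close>)
  have e3: "f x 3 = f (mk6 a0 0 a2 0 0 b2) 3"
    by (rule Dloc[OF f(1) _ X mk6_conf]) (use ab in \<open>auto simp: in_nbrs_def mk6_def x_def\<close>)
  have e4: "f x 4 = f (mk6 a0 a1 0 b0 0 0) 4"
    by (rule Dloc[OF f(1) _ X mk6_conf]) (use ab in \<open>auto simp: in_nbrs_def mk6_def x_def\<close>)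
  have e5: "f x 5 = f (mk6 0 a1 a2 0 b1 0) 5"
    by (rule Dloc[OF f(1) _ X mk6_conf]) (use ab in \<open>auto simp: in_nbrs_def mk6_def x_def\<close>)
  obtain v where v: "v \<in> {0::nat..5}" "f x v = x v" using f(2) X by blast
  then consider "f x 0 = x 0" | "f x 1 = x 1" | "f x 2 = x 2" | "f x 3 = x 3" | "f x 4 = x 4" | "f x 5 = x 5"
    unfolding V6 by blast
  then show False
  proof cases
    case 1 then show False using e0 ab(7) unfolding x_def mk6_app by simp
  next
    case 2 then show False using e1 ab(8) unfolding x_def mk6_app by simp
  next
    case 3 then show False using e2 ab(9) unfolding x_def mk6_app by simp
  next
    case 4 then show False using e3 ab(10) unfolding x_def mk6_app by simp
  next
    case 5 then show False using e4 ab(11) unfolding x_def mk6_app by simp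
  next
    case 6 then show False using e5 ab(12) unfolding x_def mk6_app by simp
  qed
qed


definition F6 :: "(nat \<Rightarrow> nat) \<Rightarrow> nat \<Rightarrow> nat" where
  "F6 x = (\<lambda>v. if v = 0 then (T0 ! (4 * x 1 + x 5)) mod 4
     else if v = 1 then (T1 ! (4 * x 2 + x 3)) mod 4
     else if v = 2 then (T2 ! (4 * x 0 + x 4)) mod 4
     else if v = 3 then (T3 ! (16 * x 5 + 4 * x 0 + x 2)) mod 4
     else if v = 4 then (T4 ! (16 * x 3 + 4 * x 1 + x 0)) mod 4
     else if v = 5 then (T5 ! (16 * x 4 + 4 * x 2 + x 1)) mod 4 else undefined)"

lemma F6_lt: "v \<in> {0..5} \<Longrightarrow> F6 x v \<in> {..<4}"
  unfolding V6 by (elim disjE) (simp_all add: F6_def)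
lemma F6_out: "v \<notin> {0..5} \<Longrightarrow> F6 x v = undefined"
  unfolding V6 by (simp add: F6_def)

definition \<phi>6 :: "(nat \<Rightarrow> nat) \<Rightarrow> nat" where
  "\<phi>6 y = (if fpfN (y 0) (y 1) (y 2) (y 3) 0 (y 5) then 0
     else if fpfN (y 0) (y 1) (y 2) (y 3) 1 (y 5) then 1
     else if fpfN (y 0) (y 1) (y 2) (y 3) 2 (y 5) then 2 else 3)"

lemma U6: "x0 < 4 \<Longrightarrow> x1 < 4 \<Longrightarrow> x2 < 4 \<Longrightarrow> x3 < 4 \<Longrightarrow> x5 < 4 \<Longrightarrow> c < 4 \<Longrightarrow> d < 4 \<Longrightarrow>
   fpfN x0 x1 x2 x3 c x5 \<Longrightarrow> fpfN x0 x1 x2 x3 d x5 \<Longrightarrow> c = d"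
proof -
  have m: "\<And>a::nat. a < 4 \<Longrightarrow> a \<in> set [0..<4]" by simp
  assume as: "x0 < 4" "x1 < 4" "x2 < 4" "x3 < 4" "x5 < 4" "c < 4" "d < 4"
    "fpfN x0 x1 x2 x3 c x5" "fpfN x0 x1 x2 x3 d x5"
  note h = chk[unfolded list_all_iff]
  note h1 = bspec[OF h m[OF as(1)]]
  note h2 = bspec[OF h1 m[OF as(2)]]
  note h3 = bspec[OF h2 m[OF as(3)]]
  note h4 = bspec[OF h3 m[OF as(4)]]
  note h5 = bspec[OF h4 m[OF as(5)]]
  note h6 = bspec[OF h5 m[OF as(6)]]
  note h7 = bspec[OF h6 m[OF as(7)]]
  show "c = d" using h7 as(8,9) by blast
qed

lemma part3: "q_gadget {0::nat..5} E6 4 4"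
proof -
  have og: "oriented_graph {0::nat..5} E6" by (auto simp: oriented_graph_def)
  have Df: "D_function {0::nat..5} E6 4 F6"
    unfolding D_function_def
  proof (intro conjI ballI impI)
    fix x :: "nat \<Rightarrow> nat" assume "x \<in> configs {0..5} 4"
    show "F6 x \<in> configs {0..5} 4"
      unfolding configs_def PiE_iff extensional_def using F6_lt F6_out by auto
  next
    fix v x y assume v: "v \<in> {0::nat..5}" and "x \<in> configs {0..5} 4" "y \<in> configs {0..5} 4"
      and a: "\<forall>u\<in>in_nbrs E6 v. x u = y u"
    have a': "x u = y u" if "(u, v) \<in> E6" for u
    proof -
      have "u \<in> in_nbrs E6 v" unfolding in_nbrs_def using that by (rule CollectI)
      then show ?thesis using a by blast
    qed
    from v consider "v = 0" | "v = 1" | "v = 2" | "v = 3" | "v = 4" | "v = 5" unfolding V6 by blast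
    then show "F6 x v = F6 y v"
    proof cases
      case 1 then show ?thesis using a'[of 1] a'[of 5] by (simp add: F6_def)
    next
      case 2 then show ?thesis using a'[of 2] a'[of 3] by (simp add: F6_def)
    next
      case 3 then show ?thesis using a'[of 0] a'[of 4] by (simp add: F6_def)
    next
      case 4 then show ?thesis using a'[of 5] a'[of 0] a'[of 2] by (simp add: F6_def)
    next
      case 5 then show ?thesis using a'[of 3] a'[of 1] a'[of 0] by (simp add: F6_def)
    next
      case 6 then show ?thesis using a'[of 4] a'[of 2] a'[of 1] by (simp add: F6_def)
    qed
  qed
  have ph: "\<forall>y \<in> configs ({0::nat..5} - {4}) 4. \<phi>6 y < 4" by (simp add: \<phi>6_def)
  have fp: "x 4 = \<phi>6 (restrict x ({0..5} - {4}))"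
    if x: "x \<in> configs {0::nat..5} 4" and nf: "\<forall>v \<in> {0::nat..5}. F6 x v \<noteq> x v" for x
  proof -
    have lt: "x 0 < 4" "x 1 < 4" "x 2 < 4" "x 3 < 4" "x 4 < 4" "x 5 < 4"
      using x by (auto simp: configs_def PiE_iff)
    have fx: "fpfN (x 0) (x 1) (x 2) (x 3) (x 4) (x 5)"
      using nf[rule_format, of 0] nf[rule_format, of 1] nf[rule_format, of 2]
        nf[rule_format, of 3] nf[rule_format, of 4] nf[rule_format, of 5]
      unfolding fpfN_def F6_def by simp
    have hc: "c = x 4" if "c < 4" "fpfN (x 0) (x 1) (x 2) (x 3) c (x 5)" for c
      using U6[OF lt(1-4) lt(6) that(1) lt(5) that(2) fx] .
    have r: "restrict x ({0..5} - {4}) 0 = x 0" "restrict x ({0..5} - {4}) 1 = x 1"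
      "restrict x ({0..5} - {4}) 2 = x 2" "restrict x ({0..5} - {4}) 3 = x 3"
      "restrict x ({0..5} - {4}) 5 = x 5" by auto
    have "x 4 = 0 \<or> x 4 = 1 \<or> x 4 = 2 \<or> x 4 = 3" using lt(5) by auto
    then show ?thesis unfolding \<phi>6_def r using fx hc[of 0] hc[of 1] hc[of 2] by auto
  qed
  show ?thesis unfolding q_gadget_def
    apply (intro conjI exI[of _ F6] exI[of _ \<phi>6] ballI impI)
    apply (fact og)
    apply simp
    apply (fact ns6)
    apply (fact Df)
    apply (simp add: \<phi>6_def)
    apply (rule fp)
     apply assumption+
    done
qed

theorem proposition9:
  shows "q_gadget {1::nat} {} 2 1
    \<and> (\<forall>d \<in> {1::nat, 2, 3}. q_gadget {1, 2, 3} {(1, 2), (2, 3), (3, 1)} 3 d)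
    \<and> q_gadget {0::nat..5}
           {(1,0),(0,2),(2,1),(4,5),(5,3),(3,4),(5,0),(3,1),(4,2),(0,3),(1,4),(2,5),(0,4),(1,5),(2,3)}
           4 4"
  using part1 part2 part3 by blast

end
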